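(* The family $\mathcal{A}$ of all infinite subsets of $\mathbb{N}^{<\mathbb{N}}$ which contain no infinite chain is an M-family.
   Context: $\mathbb{N}^{<\mathbb{N}}$ is the tree of finite sequences of naturals ordered by end-extension $\sqsubset$; a chain is a subset linearly ordered by $\sqsubseteq$. An M-family is a hereditary (closed under infinite subsets) family $\mathcal{A}$ of infinite subsets such that for every sequence $(A_n)_n$ in $\mathcal{A}$ there is $A\in\mathcal{A}$ with $A\setminus\bigcup_{i\ge n}A_i$ finite for every $n$. *)

theory Defs
  imports Main "HOL-Library.Sublist"
begin

definition hereditary_family :: "'a set set \<Rightarrow> bool" where
  "hereditary_family F \<longleftrightarrow>
     (\<forall>A\<in>F. infinite A) \<and> (\<forall>A\<in>F. \<forall>B. B \<subseteq> A \<and> infinite B \<longrightarrow> B \<in> F)"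

definition M_family :: "'a set set \<Rightarrow> bool" where
  "M_family F \<longleftrightarrow> hereditary_family F \<and>
     (\<forall>As :: nat \<Rightarrow> 'a set. (\<forall>n. As n \<in> F) \<longrightarrow>
        (\<exists>A\<in>F. \<forall>n. finite (A - (\<Union>i\<in>{n..}. As i))))"

text \<open>The tree of finite sequences of naturals is modelled as nat list,
  ordered by end-extension (prefix order).\<close>

definition is_chain_tree :: "nat list set \<Rightarrow> bool" where
  "is_chain_tree C \<longleftrightarrow> (\<forall>s\<in>C. \<forall>t\<in>C. prefix s t \<or> prefix t s)"

definition no_inf_chain_family :: "nat list set set" where
  "no_inf_chain_family = {A. infinite A \<and> \<not> (\<exists>C\<subseteq>A. infinite C \<and> is_chain_tree C)}"

end

theory Submission
  imports Defs
begin

definition VV :: "nat list set \<Rightarrow> nat list set" where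
  "VV S = {t. \<forall>s\<in>S. \<not> prefix s t}"

definition InvS :: "(nat \<Rightarrow> nat list set) \<Rightarrow> nat list set \<Rightarrow> bool" where
  "InvS As S \<longleftrightarrow> infinite {m. infinite (As m \<inter> VV S)}"

lemma chain_subset: "is_chain_tree C \<Longrightarrow> D \<subseteq> C \<Longrightarrow> is_chain_tree D"
  unfolding is_chain_tree_def by blast

lemma step:
  assumes F: "\<forall>n. As n \<in> no_inf_chain_family" and fin: "finite S" and inv: "InvS As S"
  shows "\<exists>a. (\<exists>m\<ge>n. a \<in> As m) \<and> a \<in> VV S \<and> (\<forall>s\<in>S. \<not> prefix a s) \<and> InvS As (insert a S)"
proof -
  define Bad where "Bad = {a. \<not> InvS As (insert a S)}"
  have VI: "As m \<inter> VV (insert a S) = As m \<inter> VV S - {t. prefix a t}" for a m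
    by (auto simp: VV_def)
  have chain: "is_chain_tree Bad"
    unfolding is_chain_tree_def
  proof (intro ballI)
    fix a b assume a: "a \<in> Bad" and b: "b \<in> Bad"
    have fa: "finite {m. infinite (As m \<inter> VV S - {t. prefix a t})}"
      using a by (simp add: Bad_def InvS_def VI)
    have fb: "finite {m. infinite (As m \<inter> VV S - {t. prefix b t})}"
      using b by (simp add: Bad_def InvS_def VI)
    have "infinite ({m. infinite (As m \<inter> VV S)} - ({m. infinite (As m \<inter> VV S - {t. prefix a t})} \<union> {m. infinite (As m \<inter> VV S - {t. prefix b t})}))"
      using inv fa fb by (simp add: InvS_def Diff_infinite_finite)
    then obtain m where m: "infinite (As m \<inter> VV S)"
      "finite (As m \<inter> VV S - {t. prefix a t})" "finite (As m \<inter> VV S - {t. prefix b t})"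
      using infinite_imp_nonempty by blast
    have "infinite (As m \<inter> VV S - (As m \<inter> VV S - {t. prefix a t}) - (As m \<inter> VV S - {t. prefix b t}))"
      using m by (simp add: Diff_infinite_finite)
    then obtain t where "t \<in> As m \<inter> VV S - (As m \<inter> VV S - {t. prefix a t}) - (As m \<inter> VV S - {t. prefix b t})"
      using infinite_imp_nonempty by blast
    then have "prefix a t" "prefix b t" by auto
    then show "prefix a b \<or> prefix b a" using prefix_same_cases by blast
  qed
  obtain m where m: "m \<ge> n" "infinite (As m \<inter> VV S)"
  proof -
    have "infinite ({m. infinite (As m \<inter> VV S)} - {..<n})"
      using inv unfolding InvS_def by (simp add: Diff_infinite_finite)
    then obtain m where "m \<in> {m. infinite (As m \<inter> VV S)} - {..<n}"
      using infinite_imp_nonempty by blast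
    then have "n \<le> m" "infinite (As m \<inter> VV S)" by auto
    then show ?thesis using that by blast
  qed
  have fB: "finite (As m \<inter> Bad)"
  proof (rule ccontr)
    assume "infinite (As m \<inter> Bad)"
    moreover have "is_chain_tree (As m \<inter> Bad)" using chain chain_subset by blast
    ultimately show False using F unfolding no_inf_chain_family_def by blast
  qed
  have fP: "finite {t. \<exists>s\<in>S. prefix t s}"
  proof -
    have "{t. \<exists>s\<in>S. prefix t s} = (\<Union>s\<in>S. set (prefixes s))" by auto
    then show ?thesis using fin by simp
  qed
  have "infinite (As m \<inter> VV S - (As m \<inter> Bad) - {t. \<exists>s\<in>S. prefix t s})"
    using m fB fP by (simp add: Diff_infinite_finite)
  then obtain a where a: "a \<in> As m \<inter> VV S - (As m \<inter> Bad) - {t. \<exists>s\<in>S. prefix t s}"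
    using infinite_imp_nonempty by blast
  then show ?thesis using m(1) by (auto simp: Bad_def)
qed

theorem mainTheorem18:
  shows "M_family no_inf_chain_family"
  unfolding M_family_def
proof (intro conjI allI impI)
  show "hereditary_family no_inf_chain_family"
    unfolding hereditary_family_def no_inf_chain_family_def by blast
next
  fix As :: "nat \<Rightarrow> nat list set"
  assume F: "\<forall>n. As n \<in> no_inf_chain_family"
  define P where "P n S a \<longleftrightarrow> (\<exists>m\<ge>n. a \<in> As m) \<and> a \<in> VV S \<and> (\<forall>s\<in>S. \<not> prefix a s) \<and> InvS As (insert a S)"
    for n S a
  define g where "g n S = (SOME a. P n S a)" for n S
  define Ss where "Ss = rec_nat {} (\<lambda>n S. insert (g n S) S)"
  have Ss0: "Ss 0 = {}" and SsS: "Ss (Suc n) = insert (g n (Ss n)) (Ss n)" for n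
    by (simp_all add: Ss_def)
  have inv: "finite (Ss n) \<and> InvS As (Ss n) \<and> P n (Ss n) (g n (Ss n))" for n
  proof (induction n)
    case 0
    have "InvS As {}"
      using F by (simp add: InvS_def VV_def no_inf_chain_family_def)
    then show ?case using step[OF F, of "{}" 0] unfolding g_def P_def[symmetric] Ss0
      by (auto intro: someI_ex)
  next
    case (Suc n)
    then have "finite (Ss (Suc n))" "InvS As (Ss (Suc n))"
      by (auto simp: SsS P_def)
    then show ?case using step[OF F, of "Ss (Suc n)" "Suc n"] unfolding g_def P_def[symmetric]
      by (auto intro: someI_ex)
  qed
  define a where "a n = g n (Ss n)" for n
  have Pn: "P n (Ss n) (a n)" for n using inv[of n] unfolding a_def by blast
  have Ss_eq: "Ss n = a ` {..<n}" for n
    by (induction n) (auto simp: Ss0 SsS a_def lessThan_Suc)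
  have incomp: "\<not> prefix (a i) (a j) \<and> \<not> prefix (a j) (a i)" if "i < j" for i j
  proof -
    have "a i \<in> Ss j" using that Ss_eq by auto
    then show ?thesis using Pn[of j] unfolding P_def VV_def by blast
  qed
  have inj: "inj a"
  proof (rule injI)
    fix i j assume "a i = a j"
    then show "i = j" using incomp[of i j] incomp[of j i]
      by (metis linorder_neqE_nat prefix_order.order_refl)
  qed
  have cmp: "prefix (a i) (a j) \<or> prefix (a j) (a i) \<Longrightarrow> i = j" for i j
    using incomp[of i j] incomp[of j i] by (metis linorder_neqE_nat)
  have "range a \<in> no_inf_chain_family"
    unfolding no_inf_chain_family_def
  proof (intro CollectI conjI notI)
    assume "finite (range a)"
    then show False using inj finite_imageD[of a UNIV] by auto
  next
    assume "\<exists>C\<subseteq>range a. infinite C \<and> is_chain_tree C"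
    then obtain C where C: "C \<subseteq> range a" "infinite C" "is_chain_tree C" by blast
    then obtain x where x: "x \<in> C" using infinite_imp_nonempty by blast
    have "C \<subseteq> {x}"
    proof
      fix y assume y: "y \<in> C"
      obtain i j where "x = a i" "y = a j" using x y C(1) by blast
      moreover have "prefix x y \<or> prefix y x" using C(3) x y unfolding is_chain_tree_def by blast
      ultimately show "y \<in> {x}" using cmp by auto
    qed
    then show False using C(2) finite_subset by blast
  qed
  moreover have "finite (range a - (\<Union>i\<in>{n..}. As i))" for n
  proof -
    have "range a - (\<Union>i\<in>{n..}. As i) \<subseteq> a ` {..<n}"
    proof
      fix x assume x: "x \<in> range a - (\<Union>i\<in>{n..}. As i)"
      then obtain j where j: "x = a j" by blast
      obtain m where "m \<ge> j" "a j \<in> As m" using Pn[of j] unfolding P_def by blast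
      then have "j < n" using x j by (metis DiffD2 UN_I atLeast_iff linorder_not_le order_trans)
      then show "x \<in> a ` {..<n}" using j by blast
    qed
    then show ?thesis using finite_subset by blast
  qed
  ultimately show "\<exists>A\<in>no_inf_chain_family. \<forall>n. finite (A - (\<Union>i\<in>{n..}. As i))" by blast
qed

end
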